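(* Let $k\ne\mathbb{F}_2$ be a field, $p=\operatorname{char}(k)$, and let $f\in k[x_1,\dots,x_n]_d$ with $d\ge3$. Suppose that in some basis $x_1,\dots,x_n$ the following hold: (1) $\Xi(\partial f/\partial x_i)\ne\varnothing$ for all $1\le i\le n$; (2) $\Xi(\partial f/\partial x_i)\cap\Xi(\partial f/\partial x_j)=\varnothing$ for all $1\le i<j\le n$; (3) $\Xi(f)$ equals the set of exponent vectors $(d_1,\dots,d_n)$ with $\sum d_i=d$ such that $p\nmid d_i$ for some $i$ and $\Xi\bigl(\partial(x_1^{d_1}\cdots x_n^{d_n})/\partial x_i\bigr)\subset\bigcup_{j=1}^n\Xi(\partial f/\partial x_j)$ for all $1\le i\le n$; (4) the graph with vertex set $\{1,\dots,n\}$ and edges $\{(ij)\mid\partial^2f/\partial x_i\partial x_j\ne0\}$ is connected. Then $f$ is not a direct sum.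
   Context: For a nonzero form $h$ in the basis $x_1,\dots,x_n$, the state $\Xi(h)$ is the set of exponent vectors $(d_1,\dots,d_n)$ of monomials $x_1^{d_1}\cdots x_n^{d_n}$ appearing in $h$ with nonzero coefficient; $\Xi(0)=\varnothing$. (For $p=0$, "$p\nmid d_i$" means $d_i\ne0$.) A form $f$ is a direct sum if, after a linear change of variables, $f=f_1(x_1,\dots,x_a)+f_2(x_{a+1},\dots,x_n)$ with $1\le a\le n-1$ and $f_1,f_2\ne0$. *)

theory Defs
  imports "HOL-Library.Poly_Mapping"
begin

text \<open>Polynomials in the variables x_0, x_1, ... over a field: finitely supported maps
  from exponent vectors exponent vectors to coefficients.\<close>

type_synonym 'k mpoly = "(nat \<Rightarrow>\<^sub>0 nat) \<Rightarrow>\<^sub>0 'k"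

definition state :: "'k::zero mpoly \<Rightarrow> (nat \<Rightarrow>\<^sub>0 nat) set" where
  "state h = Poly_Mapping.keys h"

definition mono :: "(nat \<Rightarrow>\<^sub>0 nat) \<Rightarrow> 'k::{zero,one} mpoly" where
  "mono \<alpha> = Poly_Mapping.single \<alpha> 1"

definition var :: "nat \<Rightarrow> 'k::{zero,one} mpoly" where
  "var i = mono (Poly_Mapping.single i 1)"

definition const :: "'k::zero \<Rightarrow> 'k mpoly" where
  "const c = Poly_Mapping.single 0 c"

definition pd :: "nat \<Rightarrow> 'k::comm_ring_1 mpoly \<Rightarrow> 'k mpoly" where
  "pd i f = (\<Sum>\<alpha>\<in>Poly_Mapping.keys f. Poly_Mapping.single (\<alpha> - Poly_Mapping.single i 1)
                               (of_nat (Poly_Mapping.lookup \<alpha> i) * Poly_Mapping.lookup f \<alpha>))"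

definition is_form :: "nat \<Rightarrow> nat \<Rightarrow> 'k::zero mpoly \<Rightarrow> bool" where
  "is_form n d f \<longleftrightarrow> (\<forall>\<alpha>\<in>Poly_Mapping.keys f. Poly_Mapping.keys \<alpha> \<subseteq> {..<n} \<and> (\<Sum>i<n. Poly_Mapping.lookup \<alpha> i) = d)"

definition in_vars :: "nat set \<Rightarrow> 'k::zero mpoly \<Rightarrow> bool" where
  "in_vars V f \<longleftrightarrow> (\<forall>\<alpha>\<in>Poly_Mapping.keys f. Poly_Mapping.keys \<alpha> \<subseteq> V)"

definition lin_subst :: "nat \<Rightarrow> (nat \<Rightarrow> nat \<Rightarrow> 'k::comm_ring_1) \<Rightarrow> 'k mpoly \<Rightarrow> 'k mpoly" where
  "lin_subst n A f = (\<Sum>\<alpha>\<in>Poly_Mapping.keys f. const (Poly_Mapping.lookup f \<alpha>) *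
       (\<Prod>i<n. (\<Sum>j<n. const (A i j) * var j) ^ Poly_Mapping.lookup \<alpha> i))"

definition invertible_mat :: "nat \<Rightarrow> (nat \<Rightarrow> nat \<Rightarrow> 'k::comm_ring_1) \<Rightarrow> bool" where
  "invertible_mat n A \<longleftrightarrow> (\<exists>B. \<forall>i<n. \<forall>j<n.
      (\<Sum>l<n. A i l * B l j) = (if i = j then 1 else 0) \<and>
      (\<Sum>l<n. B i l * A l j) = (if i = j then 1 else 0))"

definition direct_sum :: "nat \<Rightarrow> 'k::comm_ring_1 mpoly \<Rightarrow> bool" where
  "direct_sum n f \<longleftrightarrow> (\<exists>A a f1 f2. invertible_mat n A \<and> 1 \<le> a \<and> a \<le> n - 1 \<and>
      f1 \<noteq> 0 \<and> f2 \<noteq> 0 \<and> in_vars {..<a} f1 \<and> in_vars {a..<n} f2 \<and>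
      lin_subst n A f = f1 + f2)"

definition hessian_graph_connected :: "nat \<Rightarrow> 'k::comm_ring_1 mpoly \<Rightarrow> bool" where
  "hessian_graph_connected n f \<longleftrightarrow>
     (\<forall>i<n. \<forall>j<n. (i, j) \<in> {(u, v). u < n \<and> v < n \<and> pd u (pd v f) \<noteq> 0}\<^sup>*)"

end

theory Submission
  imports Defs
begin

abbreviation ev :: "nat \<Rightarrow> (nat \<Rightarrow>\<^sub>0 nat)" where "ev k \<equiv> Poly_Mapping.single k 1"

lemma lookup_const_mult: "Poly_Mapping.lookup (const c * g) k = c * Poly_Mapping.lookup g k"
proof -
  have "const c * g = Poly_Mapping.map ((*) c) g"
    by (simp add: const_def mult_map_scale_conv_mult)
  then show ?thesis by (simp add: Poly_Mapping.map.rep_eq when_def)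
qed

lemma add_ev_minus: "(\<beta> + ev j) - ev j = \<beta>"
  by (rule poly_mapping_eqI) (simp add: lookup_add lookup_minus lookup_single when_def)

lemma minus_ev_add: "Poly_Mapping.lookup \<alpha> j \<noteq> 0 \<Longrightarrow> (\<alpha> - ev j) + ev j = \<alpha>"
  by (rule poly_mapping_eqI) (auto simp add: lookup_add lookup_minus lookup_single when_def)

lemma sum_when_eq:
  assumes "finite K"
  shows "(\<Sum>x\<in>K. (g x when x = y)) = (g y when y \<in> K)"
proof (cases "y \<in> K")
  case True
  then show ?thesis using assms
    by (simp add: when_def sum.delta)
next
  case False
  then show ?thesis by (auto simp: when_def intro!: sum.neutral)
qed

lemma lookup_pd:
  "Poly_Mapping.lookup (pd j h) \<beta> = of_nat (Poly_Mapping.lookup \<beta> j + 1) * Poly_Mapping.lookup h (\<beta> + ev j)"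
proof -
  have "Poly_Mapping.lookup (pd j h) \<beta> =
     (\<Sum>\<alpha>\<in>Poly_Mapping.keys h. (of_nat (Poly_Mapping.lookup \<alpha> j) * Poly_Mapping.lookup h \<alpha> when \<alpha> - ev j = \<beta>))"
    by (simp add: pd_def lookup_sum lookup_single)
  also have "\<dots> = (\<Sum>\<alpha>\<in>Poly_Mapping.keys h. (of_nat (Poly_Mapping.lookup \<alpha> j) * Poly_Mapping.lookup h \<alpha> when \<alpha> = \<beta> + ev j))"
  proof (rule sum.cong[OF refl])
    fix \<alpha>
    show "(of_nat (Poly_Mapping.lookup \<alpha> j) * Poly_Mapping.lookup h \<alpha> when \<alpha> - ev j = \<beta>) =
          (of_nat (Poly_Mapping.lookup \<alpha> j) * Poly_Mapping.lookup h \<alpha> when \<alpha> = \<beta> + ev j)"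
    proof (cases "Poly_Mapping.lookup \<alpha> j = 0")
      case True
      moreover have "\<alpha> \<noteq> \<beta> + ev j" using True by (auto simp: lookup_add)
      ultimately show ?thesis by (simp add: when_def)
    next
      case False
      then show ?thesis using minus_ev_add[OF False] add_ev_minus[of \<beta> j]
        by (auto simp: when_def)
    qed
  qed
  also have "\<dots> = (of_nat (Poly_Mapping.lookup (\<beta> + ev j) j) * Poly_Mapping.lookup h (\<beta> + ev j) when \<beta> + ev j \<in> Poly_Mapping.keys h)"
    by (rule sum_when_eq) simp
  also have "\<dots> = of_nat (Poly_Mapping.lookup \<beta> j + 1) * Poly_Mapping.lookup h (\<beta> + ev j)"
    by (auto simp: when_def lookup_add in_keys_iff)
  finally show ?thesis .
qed


lemma mpoly_induct[case_names zero single add]: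
  assumes "P 0" and "\<And>a c. P (Poly_Mapping.single a c)"
    and "\<And>f g. P f \<Longrightarrow> P g \<Longrightarrow> P (f + g)"
  shows "P f"
proof (induction f rule: update_induct)
  case const then show ?case using assms(1) .
next
  case (update f a b)
  have "Poly_Mapping.update a b f = f + Poly_Mapping.single a b"
    using update(1)
    by (intro poly_mapping_eqI) (auto simp: lookup_update lookup_add lookup_single when_def in_keys_iff)
  then show ?case using assms(2,3) update(3) by simp
qed

lemma const_zero[simp]: "const 0 = 0" by (simp add: const_def)
lemma const_one[simp]: "const 1 = 1" by (simp add: const_def)
lemma const_add: "const (a + b) = const a + const b" by (simp add: const_def single_add)
lemma const_mult: "const (a * b) = const a * const b" by (simp add: const_def mult_single)
lemma const_sum: "const (\<Sum>i\<in>I. g i) = (\<Sum>i\<in>I. const (g i))"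
  by (induction I rule: infinite_finite_induct) (auto simp: const_add)

lemma pd_add: "pd j (g + h) = pd j g + pd j h"
  by (rule poly_mapping_eqI) (simp add: lookup_pd lookup_add algebra_simps)

lemma pd_zero[simp]: "pd j 0 = 0"
  by (simp add: pd_def)

lemma pd_const_mult: "pd j (const c * g) = const c * pd j g"
  by (rule poly_mapping_eqI) (simp only: lookup_pd lookup_const_mult mult.left_commute)

lemma pd_sum: "pd j (\<Sum>i\<in>I. g i) = (\<Sum>i\<in>I. pd j (g i))"
  by (induction I rule: infinite_finite_induct) (auto simp: pd_add)

lemma pd_single: "pd j (Poly_Mapping.single \<alpha> c) =
   Poly_Mapping.single (\<alpha> - ev j) (of_nat (Poly_Mapping.lookup \<alpha> j) * c)"
proof (rule poly_mapping_eqI)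
  fix \<beta>
  show "Poly_Mapping.lookup (pd j (Poly_Mapping.single \<alpha> c)) \<beta> =
        Poly_Mapping.lookup (Poly_Mapping.single (\<alpha> - ev j) (of_nat (Poly_Mapping.lookup \<alpha> j) * c)) \<beta>"
  proof (cases "Poly_Mapping.lookup \<alpha> j = 0")
    case True
    then have "\<alpha> \<noteq> \<beta> + ev j" by (auto simp: lookup_add)
    then show ?thesis using True by (simp add: lookup_pd lookup_single when_def)
  next
    case False
    have "(\<alpha> = \<beta> + ev j) = (\<alpha> - ev j = \<beta>)"
      using minus_ev_add[OF False] add_ev_minus[of \<beta> j] by metis
    moreover have "\<alpha> = \<beta> + ev j \<Longrightarrow> (of_nat (Poly_Mapping.lookup \<beta> j + 1) :: 'a) = of_nat (Poly_Mapping.lookup \<alpha> j)"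
      by (simp add: lookup_add)
    ultimately show ?thesis
      by (auto simp add: lookup_pd lookup_single when_def simp del: of_nat_add)
  qed
qed

lemma pd_leibniz_single:
  "pd j (Poly_Mapping.single \<alpha> a * Poly_Mapping.single \<beta> b) =
    pd j (Poly_Mapping.single \<alpha> a) * Poly_Mapping.single \<beta> b + Poly_Mapping.single \<alpha> a * pd j (Poly_Mapping.single \<beta> b)"
proof -
  have e1: "Poly_Mapping.single (\<alpha> - ev j + \<beta>) (of_nat (Poly_Mapping.lookup \<alpha> j) * a * b) =
            Poly_Mapping.single (\<alpha> + \<beta> - ev j) (of_nat (Poly_Mapping.lookup \<alpha> j) * a * b)"
  proof (cases "Poly_Mapping.lookup \<alpha> j = 0")
    case True then show ?thesis by simp
  next
    case False
    have "\<alpha> - ev j + \<beta> = \<alpha> + \<beta> - ev j"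
      using False by (intro poly_mapping_eqI) (auto simp: lookup_add lookup_minus lookup_single when_def)
    then show ?thesis by simp
  qed
  have e2: "Poly_Mapping.single (\<alpha> + (\<beta> - ev j)) (a * (of_nat (Poly_Mapping.lookup \<beta> j) * b)) =
            Poly_Mapping.single (\<alpha> + \<beta> - ev j) (of_nat (Poly_Mapping.lookup \<beta> j) * a * b)"
  proof (cases "Poly_Mapping.lookup \<beta> j = 0")
    case True then show ?thesis by simp
  next
    case False
    have "\<alpha> + (\<beta> - ev j) = \<alpha> + \<beta> - ev j"
      using False by (intro poly_mapping_eqI) (auto simp: lookup_add lookup_minus lookup_single when_def)
    then show ?thesis by (simp add: ac_simps)
  qed
  have "pd j (Poly_Mapping.single \<alpha> a * Poly_Mapping.single \<beta> b) =
     Poly_Mapping.single (\<alpha> + \<beta> - ev j) (of_nat (Poly_Mapping.lookup \<alpha> j + Poly_Mapping.lookup \<beta> j) * (a * b))"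
    by (simp only: mult_single pd_single lookup_add)
  also have "\<dots> = Poly_Mapping.single (\<alpha> + \<beta> - ev j) (of_nat (Poly_Mapping.lookup \<alpha> j) * a * b)
       + Poly_Mapping.single (\<alpha> + \<beta> - ev j) (of_nat (Poly_Mapping.lookup \<beta> j) * a * b)"
    by (simp only: single_add[symmetric] of_nat_add algebra_simps)
  also have "\<dots> = pd j (Poly_Mapping.single \<alpha> a) * Poly_Mapping.single \<beta> b + Poly_Mapping.single \<alpha> a * pd j (Poly_Mapping.single \<beta> b)"
    by (simp only: pd_single mult_single e1 e2)
  finally show ?thesis .
qed

lemma pd_leibniz: "pd j (g * h) = pd j g * h + g * pd j h"
proof (induction g rule: mpoly_induct)
  case zero then show ?case by simp
next
  case (single a c)
  show ?case
  proof (induction h rule: mpoly_induct)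
    case zero then show ?case by simp
  next
    case (single b e) then show ?case by (rule pd_leibniz_single)
  next
    case (add f g) then show ?case by (simp add: distrib_left pd_add algebra_simps)
  qed
next
  case (add f g) then show ?case by (simp add: distrib_right pd_add algebra_simps)
qed

lemma pd_power: "pd j (g ^ k) = of_nat k * g ^ (k - 1) * pd j g"
proof (induction k)
  case 0 then show ?case by (simp add: pd_def)
next
  case (Suc k)
  show ?case
  proof (cases k)
    case 0 then show ?thesis by simp
  next
    case (Suc m)
    have "pd j (g ^ Suc k) = pd j g * g ^ k + g * pd j (g ^ k)" by (simp add: pd_leibniz)
    also have "\<dots> = of_nat (Suc k) * g ^ k * pd j g"
      using Suc.IH Suc by (simp add: algebra_simps)
    finally show ?thesis by simp
  qed
qed


definition Lf :: "nat \<Rightarrow> (nat \<Rightarrow> nat \<Rightarrow> 'k::comm_ring_1) \<Rightarrow> nat \<Rightarrow> 'k mpoly" where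
  "Lf n A i = (\<Sum>j<n. const (A i j) * var j)"

definition Mf :: "nat \<Rightarrow> (nat \<Rightarrow> nat \<Rightarrow> 'k::comm_ring_1) \<Rightarrow> (nat \<Rightarrow>\<^sub>0 nat) \<Rightarrow> 'k mpoly" where
  "Mf n A \<alpha> = (\<Prod>i<n. Lf n A i ^ Poly_Mapping.lookup \<alpha> i)"

lemma lin_subst_alt: "lin_subst n A g = (\<Sum>\<alpha>\<in>Poly_Mapping.keys g. const (Poly_Mapping.lookup g \<alpha>) * Mf n A \<alpha>)"
  by (simp add: lin_subst_def Mf_def Lf_def)

lemma sum_keys_ext:
  assumes "finite K" "Poly_Mapping.keys g \<subseteq> K"
  shows "(\<Sum>\<alpha>\<in>Poly_Mapping.keys g. const (Poly_Mapping.lookup g \<alpha>) * \<Phi> \<alpha>) =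
         (\<Sum>\<alpha>\<in>K. const (Poly_Mapping.lookup g \<alpha>) * (\<Phi> \<alpha> :: 'k::comm_ring_1 mpoly))"
  using assms by (intro sum.mono_neutral_left) (auto simp: in_keys_iff)

lemma lin_subst_add: "lin_subst n A (g + h) = lin_subst n A g + lin_subst n A h"
proof -
  let ?K = "Poly_Mapping.keys g \<union> Poly_Mapping.keys h"
  have k: "Poly_Mapping.keys (g + h) \<subseteq> ?K" by (rule keys_add)
  show ?thesis
    unfolding lin_subst_alt
    by (subst (1 2 3) sum_keys_ext[where K = ?K]) (use k in \<open>auto simp: lookup_add const_add distrib_right sum.distrib\<close>)
qed

lemma lin_subst_zero[simp]: "lin_subst n A 0 = 0"
  by (simp add: lin_subst_def)

lemma lin_subst_single: "lin_subst n A (Poly_Mapping.single \<alpha> c) = const c * Mf n A \<alpha>"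
  by (cases "c = 0") (simp_all add: lin_subst_alt)

lemma const_mult_single: "const c * Poly_Mapping.single \<alpha> a = Poly_Mapping.single \<alpha> (c * a)"
  by (simp add: const_def mult_single)

lemma lin_subst_const_mult: "lin_subst n A (const c * g) = const c * lin_subst n A g"
  by (induction g rule: mpoly_induct)
     (simp_all add: const_mult_single lin_subst_single const_mult lin_subst_add distrib_left mult.assoc)

lemma lin_subst_sum: "lin_subst n A (\<Sum>i\<in>I. g i) = (\<Sum>i\<in>I. lin_subst n A (g i))"
  by (induction I rule: infinite_finite_induct) (auto simp: lin_subst_add)

lemma Mf_add: "Mf n A (\<alpha> + \<beta>) = Mf n A \<alpha> * Mf n A \<beta>"
  by (simp add: Mf_def lookup_add power_add prod.distrib)

lemma Mf_zero[simp]: "Mf n A 0 = 1"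
  by (simp add: Mf_def)

lemma lin_subst_mult: "lin_subst n A (g * h) = lin_subst n A g * lin_subst n A h"
proof (induction g rule: mpoly_induct)
  case zero then show ?case by simp
next
  case (single a c)
  show ?case
  proof (induction h rule: mpoly_induct)
    case zero then show ?case by simp
  next
    case (single b e) then show ?case
      by (simp add: mult_single lin_subst_single Mf_add const_mult ac_simps)
  next
    case (add f g) then show ?case by (simp add: distrib_left lin_subst_add)
  qed
next
  case (add f g) then show ?case by (simp add: distrib_right lin_subst_add)
qed

lemma lin_subst_one[simp]: "lin_subst n A 1 = 1"
  by (simp add: lin_subst_single mult_single flip: single_one)

lemma lin_subst_power: "lin_subst n A (g ^ k) = lin_subst n A g ^ k"
  by (induction k) (simp_all add: lin_subst_mult)

lemma lin_subst_prod: "lin_subst n A (\<Prod>i\<in>I. g i) = (\<Prod>i\<in>I. lin_subst n A (g i))"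
  by (induction I rule: infinite_finite_induct) (auto simp: lin_subst_mult)

lemma lin_subst_var: "lin_subst n A (var k) = (if k < n then Lf n A k else 1)"
proof -
  have "Mf n A (ev k) = (\<Prod>i<n. (if k = i then Lf n A i else 1))"
    unfolding Mf_def by (intro prod.cong) (auto simp: lookup_single when_def)
  also have "\<dots> = (if k < n then Lf n A k else 1)"
    by (simp add: prod.delta)
  finally show ?thesis by (simp add: var_def mono_def lin_subst_single)
qed

lemma pd_var: "pd i (var k :: 'k::comm_ring_1 mpoly) = (if i = k then 1 else 0)"
  by (auto simp: var_def mono_def pd_single lookup_single when_def simp flip: single_one)

lemma pd_one[simp]: "pd i 1 = 0"
  by (simp add: pd_single flip: single_one)

lemma pd_Lf: "j < n \<Longrightarrow> pd j (Lf n A k) = const (A k j)"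
  by (simp add: Lf_def pd_sum pd_const_mult pd_var if_distrib cong: if_cong)


lemma exp_induct:
  assumes "P 0" and step: "\<And>\<alpha> k. P \<alpha> \<Longrightarrow> P (\<alpha> + ev k)"
  shows "P (\<alpha> :: nat \<Rightarrow>\<^sub>0 nat)"
proof (induction \<alpha> rule: update_induct)
  case const then show ?case using assms(1) .
next
  case (update f a b)
  have u: "Poly_Mapping.update a b f = f + Poly_Mapping.single a b"
    using update(1)
    by (intro poly_mapping_eqI) (auto simp: lookup_update lookup_add lookup_single when_def in_keys_iff)
  have "P (f + Poly_Mapping.single a m)" for m
  proof (induction m)
    case 0 then show ?case using update(3) by simp
  next
    case (Suc m)
    have "f + Poly_Mapping.single a (Suc m) = (f + Poly_Mapping.single a m) + ev a"
      by (simp add: single_add[symmetric] add.assoc)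
    then show ?case using step[OF Suc] by simp
  qed
  then show ?case using u by simp
qed

lemma chain_var:
  assumes "j < n"
  shows "pd j (lin_subst n A (var k)) = (\<Sum>i<n. const (A i j) * lin_subst n A (pd i (var k)))"
proof (cases "k < n")
  case True
  have "(\<Sum>i<n. const (A i j) * lin_subst n A (pd i (var k))) = (\<Sum>i<n. if i = k then const (A k j) else 0)"
    by (intro sum.cong) (auto simp: pd_var)
  also have "\<dots> = const (A k j)" using True by simp
  finally show ?thesis using True assms by (simp add: lin_subst_var pd_Lf)
next
  case False
  then have "(\<Sum>i<n. const (A i j) * lin_subst n A (pd i (var k))) = 0"
    by (intro sum.neutral) (auto simp: pd_var)
  then show ?thesis using False by (simp add: lin_subst_var)
qed

lemma chain_mono:
  assumes "j < n"
  shows "pd j (lin_subst n A (Poly_Mapping.single \<alpha> 1)) =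
     (\<Sum>i<n. const (A i j) * lin_subst n A (pd i (Poly_Mapping.single \<alpha> 1)))"
proof (induction \<alpha> rule: exp_induct)
  case 1
  then show ?case by simp
next
  case (2 \<alpha> k)
  have s: "Poly_Mapping.single (\<alpha> + ev k) 1 = Poly_Mapping.single \<alpha> (1::'a) * var k"
    by (simp add: var_def mono_def mult_single)
  show ?case
    unfolding s
    by (simp add: lin_subst_mult pd_leibniz 2 chain_var[OF assms] lin_subst_add
        sum_distrib_left sum_distrib_right sum.distrib distrib_left ac_simps)
qed

lemma chain_rule:
  assumes "j < n"
  shows "pd j (lin_subst n A g) = (\<Sum>i<n. const (A i j) * lin_subst n A (pd i g))"
proof (induction g rule: mpoly_induct)
  case zero then show ?case by simp
next
  case (single a c)
  have s: "Poly_Mapping.single a c = const c * Poly_Mapping.single a 1"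
    by (simp add: const_mult_single)
  show ?case unfolding s
    by (simp add: lin_subst_const_mult pd_const_mult chain_mono[OF assms] sum_distrib_left ac_simps)
next
  case (add f g)
  then show ?case by (simp add: pd_add lin_subst_add distrib_left sum.distrib)
qed


lemma lin_subst_Lf: "lin_subst n B (Lf n A i) = (\<Sum>j<n. const (A i j) * Lf n B j)"
  by (simp add: Lf_def lin_subst_sum lin_subst_const_mult lin_subst_var)

lemma Lf_comp:
  assumes AB: "\<forall>i<n. \<forall>l<n. (\<Sum>j<n. A i j * B j l) = (if i = l then 1 else 0)" and i: "i < n"
  shows "lin_subst n B (Lf n A i) = var i"
proof -
  have "lin_subst n B (Lf n A i) = (\<Sum>j<n. \<Sum>l<n. const (A i j) * (const (B j l) * var l))"
    unfolding lin_subst_Lf by (simp add: Lf_def sum_distrib_left)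
  also have "\<dots> = (\<Sum>l<n. \<Sum>j<n. const (A i j * B j l) * var l)"
    by (subst sum.swap) (simp add: const_mult mult.assoc)
  also have "\<dots> = (\<Sum>l<n. const (\<Sum>j<n. A i j * B j l) * var l)"
    by (simp add: const_sum sum_distrib_right)
  also have "\<dots> = (\<Sum>l<n. if l = i then var i else 0)"
    using AB i by (intro sum.cong) auto
  also have "\<dots> = var i" using i by simp
  finally show ?thesis .
qed

lemma var_pow: "(var i :: 'k::comm_ring_1 mpoly) ^ k = Poly_Mapping.single (Poly_Mapping.single i k) 1"
proof (induction k)
  case 0 then show ?case by simp
next
  case (Suc k)
  then show ?case by (simp add: var_def mono_def mult_single single_add[symmetric])
qed

lemma prod_single_vars:
  "(\<Prod>i\<in>I. Poly_Mapping.single (Poly_Mapping.single i (h i)) (1::'k::comm_ring_1)) =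
     Poly_Mapping.single (\<Sum>i\<in>I. Poly_Mapping.single i (h i)) 1"
  by (induction I rule: infinite_finite_induct) (simp_all add: mult_single)

lemma sum_singles_exp:
  fixes \<alpha> :: "nat \<Rightarrow>\<^sub>0 nat"
  assumes "Poly_Mapping.keys \<alpha> \<subseteq> {..<n}"
  shows "(\<Sum>i<n. Poly_Mapping.single i (Poly_Mapping.lookup \<alpha> i)) = \<alpha>"
proof (rule poly_mapping_eqI)
  fix k
  have "Poly_Mapping.lookup (\<Sum>i<n. Poly_Mapping.single i (Poly_Mapping.lookup \<alpha> i)) k =
        (\<Sum>i<n. (Poly_Mapping.lookup \<alpha> i when i = k))"
    by (simp add: lookup_sum lookup_single)
  also have "\<dots> = (Poly_Mapping.lookup \<alpha> k when k < n)"
    unfolding when_def by (rule trans[OF sum.delta]) auto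
  also have "\<dots> = Poly_Mapping.lookup \<alpha> k" using assms by (auto simp: when_def in_keys_iff)
  finally show "Poly_Mapping.lookup (\<Sum>i<n. Poly_Mapping.single i (Poly_Mapping.lookup \<alpha> i)) k = Poly_Mapping.lookup \<alpha> k" .
qed

lemma sum_single_keys: "(\<Sum>\<alpha>\<in>Poly_Mapping.keys g. Poly_Mapping.single \<alpha> (Poly_Mapping.lookup g \<alpha>)) = g"
proof (rule poly_mapping_eqI)
  fix k
  show "Poly_Mapping.lookup (\<Sum>\<alpha>\<in>Poly_Mapping.keys g. Poly_Mapping.single \<alpha> (Poly_Mapping.lookup g \<alpha>)) k = Poly_Mapping.lookup g k"
    by (simp add: lookup_sum lookup_single sum_when_eq when_def in_keys_iff)
qed

lemma lin_subst_comp_id: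
  assumes AB: "\<forall>i<n. \<forall>l<n. (\<Sum>j<n. A i j * B j l) = (if i = l then 1 else 0)"
    and g: "in_vars {..<n} g"
  shows "lin_subst n B (lin_subst n A g) = g"
proof -
  have M: "lin_subst n B (Mf n A \<alpha>) = Poly_Mapping.single \<alpha> 1" if "Poly_Mapping.keys \<alpha> \<subseteq> {..<n}" for \<alpha>
  proof -
    have "lin_subst n B (Mf n A \<alpha>) = (\<Prod>i<n. var i ^ Poly_Mapping.lookup \<alpha> i)"
      unfolding Mf_def lin_subst_prod lin_subst_power
      by (intro prod.cong) (auto simp: Lf_comp[OF AB])
    also have "\<dots> = Poly_Mapping.single \<alpha> 1"
      by (simp add: var_pow prod_single_vars sum_singles_exp[OF that])
    finally show ?thesis .
  qed
  have "lin_subst n B (lin_subst n A g) =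
     (\<Sum>\<alpha>\<in>Poly_Mapping.keys g. const (Poly_Mapping.lookup g \<alpha>) * lin_subst n B (Mf n A \<alpha>))"
    by (simp add: lin_subst_alt[of n A] lin_subst_sum lin_subst_const_mult)
  also have "\<dots> = (\<Sum>\<alpha>\<in>Poly_Mapping.keys g. Poly_Mapping.single \<alpha> (Poly_Mapping.lookup g \<alpha>))"
    using g by (intro sum.cong) (auto simp: in_vars_def M const_mult_single)
  also have "\<dots> = g" by (rule sum_single_keys)
  finally show ?thesis .
qed


lemma keys_add_nat: "Poly_Mapping.keys (\<beta> :: nat \<Rightarrow>\<^sub>0 nat) \<subseteq> Poly_Mapping.keys (\<beta> + \<gamma>)"
  by (auto simp: in_keys_iff lookup_add)

lemma state_pd_iff: "\<beta> \<in> state (pd j h) \<longleftrightarrow>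
   of_nat (Poly_Mapping.lookup \<beta> j + 1) * Poly_Mapping.lookup h (\<beta> + ev j) \<noteq> 0"
  by (simp add: state_def in_keys_iff lookup_pd)

lemma pd_in_vars_zero:
  assumes "in_vars V g" "i \<notin> V"
  shows "pd i g = 0"
proof (rule poly_mapping_eqI)
  fix \<beta>
  have "i \<in> Poly_Mapping.keys (\<beta> + ev i)" by (simp add: in_keys_iff lookup_add)
  then have "\<beta> + ev i \<notin> Poly_Mapping.keys g" using assms by (auto simp: in_vars_def)
  then show "Poly_Mapping.lookup (pd i g) \<beta> = Poly_Mapping.lookup 0 \<beta>"
    by (simp add: lookup_pd in_keys_iff)
qed

lemma in_vars_pd:
  assumes "in_vars V g"
  shows "in_vars V (pd m g)"
  unfolding in_vars_def
proof
  fix \<beta> assume "\<beta> \<in> Poly_Mapping.keys (pd m g)"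
  then have "\<beta> + ev m \<in> Poly_Mapping.keys g"
    by (auto simp: in_keys_iff lookup_pd)
  then show "Poly_Mapping.keys \<beta> \<subseteq> V" using assms keys_add_nat[of \<beta> "ev m"]
    by (auto simp: in_vars_def)
qed


theorem theorem5p5:
  fixes f :: "'k::field mpoly" and n d :: nat
  assumes notF2: "card (UNIV :: 'k set) \<noteq> 2"
    and form: "is_form n d f"
    and d3: "d \<ge> 3"
    and c1: "\<forall>i<n. state (pd i f) \<noteq> {}"
    and c2: "\<forall>i<n. \<forall>j<n. i < j \<longrightarrow> state (pd i f) \<inter> state (pd j f) = {}"
    and c3: "state f = {\<alpha>. Poly_Mapping.keys \<alpha> \<subseteq> {..<n} \<and> (\<Sum>i<n. Poly_Mapping.lookup \<alpha> i) = d \<and>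
                 (\<exists>i<n. \<not> CHAR('k) dvd Poly_Mapping.lookup \<alpha> i) \<and>
                 (\<forall>i<n. state (pd i (mono \<alpha> :: 'k mpoly)) \<subseteq> (\<Union>j<n. state (pd j f)))}"
    and c4: "hessian_graph_connected n f"
  shows "\<not> direct_sum n f"
proof
  assume "direct_sum n f"
  then obtain A a f1 f2 where inv: "invertible_mat n A" and a1: "1 \<le> a" and a2: "a \<le> n - 1"
    and f1v: "in_vars {..<a} f1" and f2v: "in_vars {a..<n} f2"
    and ls: "lin_subst n A f = f1 + f2"
    unfolding direct_sum_def by blast
  from inv obtain B where AB: "\<forall>i<n. \<forall>l<n. (\<Sum>j<n. A i j * B j l) = (if i = l then 1 else 0)"
    and BA: "\<forall>i<n. \<forall>l<n. (\<Sum>j<n. B i j * A j l) = (if i = l then 1 else 0)"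
    unfolding invertible_mat_def by blast
  have an: "a < n" using a1 a2 by linarith
  have fv: "in_vars {..<n} f" using form by (auto simp: is_form_def in_vars_def)
  define F where "F = lin_subst n B f1"
  define P where "P m j = (\<Sum>i<a. A m i * B i j)" for m j
  define W where "W j = state (pd j f)" for j
  define U where "U = (\<Union>j<n. W j)"

  have K0: "lin_subst n B (pd i f1) = (if i < a then (\<Sum>m<n. const (A m i) * pd m f) else 0)" if "i < n" for i
  proof (cases "i < a")
    case True
    have "pd i f2 = 0" using pd_in_vars_zero[OF f2v] True by simp
    then have "pd i f1 = pd i (lin_subst n A f)" using ls by (simp add: pd_add)
    also have "\<dots> = (\<Sum>m<n. const (A m i) * lin_subst n A (pd m f))" by (rule chain_rule[OF that])
    finally have "lin_subst n B (pd i f1) = (\<Sum>m<n. const (A m i) * lin_subst n B (lin_subst n A (pd m f)))"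
      by (simp add: lin_subst_sum lin_subst_const_mult)
    also have "\<dots> = (\<Sum>m<n. const (A m i) * pd m f)"
      using lin_subst_comp_id[OF AB in_vars_pd[OF fv]] by simp
    finally show ?thesis using True by simp
  next
    case False
    then have "pd i f1 = 0" using pd_in_vars_zero[OF f1v] by simp
    then show ?thesis using False by simp
  qed

  have K1: "pd j F = (\<Sum>m<n. const (P m j) * pd m f)" if "j < n" for j
  proof -
    have "pd j F = (\<Sum>i<n. const (B i j) * (if i < a then (\<Sum>m<n. const (A m i) * pd m f) else 0))"
      unfolding F_def chain_rule[OF that] by (intro sum.cong) (simp_all add: K0)
    also have "\<dots> = (\<Sum>i<a. const (B i j) * (\<Sum>m<n. const (A m i) * pd m f))"
    proof -
      have "(\<Sum>i<n. const (B i j) * (if i < a then (\<Sum>m<n. const (A m i) * pd m f) else 0)) =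
            (\<Sum>i<a. const (B i j) * (if i < a then (\<Sum>m<n. const (A m i) * pd m f) else 0))"
        using an by (intro sum.mono_neutral_right) auto
      then show ?thesis by simp
    qed
    also have "\<dots> = (\<Sum>m<n. \<Sum>i<a. const (A m i * B i j) * pd m f)"
      by (subst sum.swap) (simp add: sum_distrib_left const_mult ac_simps)
    also have "\<dots> = (\<Sum>m<n. const (P m j) * pd m f)"
      by (simp add: P_def const_sum sum_distrib_right)
    finally show ?thesis .
  qed
  have lkF: "Poly_Mapping.lookup (pd j F) \<beta> = (\<Sum>m<n. P m j * Poly_Mapping.lookup (pd m f) \<beta>)"
    if "j < n" for j \<beta>
    by (simp add: K1[OF that] lookup_sum lookup_const_mult)
  have KU: "\<beta> \<in> U" if "j < n" "\<beta> \<in> state (pd j F)" for j \<beta>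
  proof (rule ccontr)
    assume "\<beta> \<notin> U"
    then have "\<forall>m<n. Poly_Mapping.lookup (pd m f) \<beta> = 0"
      by (auto simp: U_def W_def state_def in_keys_iff)
    then have "Poly_Mapping.lookup (pd j F) \<beta> = 0" by (simp add: lkF[OF that(1)])
    then show False using that(2) by (simp add: state_def in_keys_iff)
  qed
  have sum_ev: "(\<Sum>i<n. Poly_Mapping.lookup (\<beta> + ev m) i) = (\<Sum>i<n. Poly_Mapping.lookup \<beta> i) + 1"
    if "m < n" for \<beta> m
  proof -
    have "(\<Sum>i<n. Poly_Mapping.lookup (ev m) i) = (\<Sum>i<n. if i = m then 1 else 0)"
      by (intro sum.cong) (auto simp: lookup_single when_def)
    also have "\<dots> = 1" using that by simp
    finally show ?thesis by (simp add: lookup_add sum.distrib)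
  qed
  have KW: "Poly_Mapping.keys \<beta> \<subseteq> {..<n} \<and> (\<Sum>i<n. Poly_Mapping.lookup \<beta> i) + 1 = d"
    if "m < n" "\<beta> \<in> W m" for m \<beta>
  proof -
    have "\<beta> + ev m \<in> Poly_Mapping.keys f" using that by (auto simp: W_def state_pd_iff in_keys_iff)
    then have "Poly_Mapping.keys (\<beta> + ev m) \<subseteq> {..<n}" "(\<Sum>i<n. Poly_Mapping.lookup (\<beta> + ev m) i) = d"
      using form by (auto simp: is_form_def)
    then show ?thesis using keys_add_nat[of \<beta> "ev m"] sum_ev[OF that(1)] by auto
  qed
  have K2: "\<beta> \<in> W j" if j: "j < n" and b: "\<beta> \<in> state (pd j F)" for j \<beta>
  proof -
    define \<alpha> where "\<alpha> = \<beta> + ev j"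
    from b have c0: "(of_nat (Poly_Mapping.lookup \<beta> j + 1) :: 'k) \<noteq> 0" and Fa: "Poly_Mapping.lookup F \<alpha> \<noteq> 0"
      by (auto simp: state_pd_iff \<alpha>_def)
    from KU[OF j b] obtain m where m: "m < n" "\<beta> \<in> W m" by (auto simp: U_def)
    note kw = KW[OF m]
    have "\<alpha> \<in> state f"
    proof -
      have "Poly_Mapping.keys \<alpha> \<subseteq> {..<n}"
        using kw j keys_add[of \<beta> "ev j"] by (auto simp: \<alpha>_def)
      moreover have "(\<Sum>i<n. Poly_Mapping.lookup \<alpha> i) = d"
        using kw sum_ev[OF j, of \<beta>] by (simp add: \<alpha>_def)
      moreover have "\<exists>i<n. \<not> CHAR('k) dvd Poly_Mapping.lookup \<alpha> i"
      proof -
        have "\<not> CHAR('k) dvd (Poly_Mapping.lookup \<beta> j + 1)"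
          using c0 of_nat_eq_0_iff_char_dvd[where 'a='k, of "Poly_Mapping.lookup \<beta> j + 1"] by blast
        then show ?thesis using j by (intro exI[of _ j]) (simp add: \<alpha>_def lookup_add)
      qed
      moreover have "state (pd i (mono \<alpha> :: 'k mpoly)) \<subseteq> U" if i: "i < n" for i
      proof
        fix \<gamma> assume "\<gamma> \<in> state (pd i (mono \<alpha> :: 'k mpoly))"
        then have g1: "(of_nat (Poly_Mapping.lookup \<gamma> i + 1) :: 'k) \<noteq> 0" and g2: "\<alpha> = \<gamma> + ev i"
          by (auto simp: state_pd_iff mono_def lookup_single when_def split: if_splits)
        have "\<gamma> \<in> state (pd i F)" using g1 Fa g2 by (simp add: state_pd_iff)
        then show "\<gamma> \<in> U" by (rule KU[OF i])
      qed
      ultimately show ?thesis by (subst c3) (auto simp: U_def W_def)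
    qed
    then have "Poly_Mapping.lookup f \<alpha> \<noteq> 0" by (simp add: state_def in_keys_iff)
    then show ?thesis using c0 by (simp add: W_def state_pd_iff \<alpha>_def)
  qed
  have disj: "W m \<inter> W j = {}" if "m < n" "j < n" "m \<noteq> j" for m j
  proof (cases "m < j")
    case True then show ?thesis using c2 that by (auto simp: W_def)
  next
    case False
    then have "j < m" using that by simp
    then have "state (pd j f) \<inter> state (pd m f) = {}" using c2 that by blast
    then show ?thesis by (auto simp: W_def)
  qed
  have K3: "P m j = 0" if mj: "m < n" "j < n" "m \<noteq> j" for m j
  proof (rule ccontr)
    assume Pne: "P m j \<noteq> 0"
    obtain \<gamma> where g: "\<gamma> \<in> W m" using c1 mj by (auto simp: W_def)
    have "Poly_Mapping.lookup (pd j F) \<gamma> = (\<Sum>m'<n. if m' = m then P m j * Poly_Mapping.lookup (pd m f) \<gamma> else 0)"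
      unfolding lkF[OF mj(2)]
    proof (intro sum.cong refl)
      fix m' assume "m' \<in> {..<n}"
      show "P m' j * Poly_Mapping.lookup (pd m' f) \<gamma> = (if m' = m then P m j * Poly_Mapping.lookup (pd m f) \<gamma> else 0)"
      proof (cases "m' = m")
        case True then show ?thesis by simp
      next
        case False
        then have "\<gamma> \<notin> W m'" using disj[of m' m] mj g \<open>m' \<in> {..<n}\<close> by blast
        then show ?thesis using False by (simp add: W_def state_def in_keys_iff)
      qed
    qed
    also have "\<dots> = P m j * Poly_Mapping.lookup (pd m f) \<gamma>"
      using mj by (subst sum.delta) auto
    finally have "\<gamma> \<in> state (pd j F)"
      using Pne g by (simp add: W_def state_def in_keys_iff)
    then have "\<gamma> \<in> W j" by (rule K2[OF mj(2)])
    then show False using disj[OF mj] g by auto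
  qed
  have K3': "pd j F = const (P j j) * pd j f" if j: "j < n" for j
  proof -
    have "pd j F = (\<Sum>m<n. if m = j then const (P j j) * pd j f else 0)"
      unfolding K1[OF j] by (intro sum.cong) (auto simp: K3 j)
    also have "\<dots> = const (P j j) * pd j f" using j by (subst sum.delta) auto
    finally show ?thesis .
  qed
  have K4: "Poly_Mapping.lookup F \<alpha> = P i i * Poly_Mapping.lookup f \<alpha>"
    if i: "i < n" and ai: "(of_nat (Poly_Mapping.lookup \<alpha> i) :: 'k) \<noteq> 0" for \<alpha> i
  proof -
    define \<beta> where "\<beta> = \<alpha> - ev i"
    have ai': "Poly_Mapping.lookup \<alpha> i \<noteq> 0" using ai by (metis of_nat_0)
    have ab: "\<beta> + ev i = \<alpha>" using minus_ev_add[OF ai'] by (simp add: \<beta>_def)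
    have bi: "Poly_Mapping.lookup \<beta> i + 1 = Poly_Mapping.lookup \<alpha> i"
      using ab by (metis lookup_add lookup_single_eq)
    have "of_nat (Poly_Mapping.lookup \<alpha> i) * Poly_Mapping.lookup F \<alpha> = Poly_Mapping.lookup (pd i F) \<beta>"
      by (simp only: lookup_pd ab bi)
    also have "\<dots> = P i i * (of_nat (Poly_Mapping.lookup \<alpha> i) * Poly_Mapping.lookup f \<alpha>)"
      by (simp only: K3'[OF i] lookup_const_mult lookup_pd ab bi)
    finally show ?thesis using ai by (simp add: ac_simps)
  qed
  have K5: "P u u = P v v" if uv: "u < n" "v < n" "pd u (pd v f) \<noteq> 0" for u v
  proof (cases "u = v")
    case True then show ?thesis by simp
  next
    case False
    obtain \<gamma> where "Poly_Mapping.lookup (pd u (pd v f)) \<gamma> \<noteq> 0"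
      using uv(3) by (metis poly_mapping_eqI lookup_zero)
    then have nz: "(of_nat (Poly_Mapping.lookup \<gamma> u + 1) :: 'k) \<noteq> 0"
      "(of_nat (Poly_Mapping.lookup (\<gamma> + ev u) v + 1) :: 'k) \<noteq> 0"
      "Poly_Mapping.lookup f (\<gamma> + ev u + ev v) \<noteq> 0"
      by (auto simp: lookup_pd)
    define \<alpha> where "\<alpha> = \<gamma> + ev u + ev v"
    have au: "Poly_Mapping.lookup \<alpha> u = Poly_Mapping.lookup \<gamma> u + 1"
      using False by (simp add: \<alpha>_def lookup_add lookup_single)
    have av: "Poly_Mapping.lookup \<alpha> v = Poly_Mapping.lookup (\<gamma> + ev u) v + 1"
      by (simp add: \<alpha>_def lookup_add)
    have fa: "Poly_Mapping.lookup f \<alpha> \<noteq> 0" using nz(3) by (simp add: \<alpha>_def)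
    have "P u u * Poly_Mapping.lookup f \<alpha> = P v v * Poly_Mapping.lookup f \<alpha>"
    proof -
      have e1: "Poly_Mapping.lookup F \<alpha> = P u u * Poly_Mapping.lookup f \<alpha>"
        using K4[OF uv(1), of \<alpha>] nz(1) au by simp
      have e2: "Poly_Mapping.lookup F \<alpha> = P v v * Poly_Mapping.lookup f \<alpha>"
        using K4[OF uv(2), of \<alpha>] nz(2) av by simp
      show ?thesis using e1 e2 by (simp only:)
    qed
    then show ?thesis using fa by (metis mult_right_cancel)
  qed
  have K6: "P x x = P y y" if "(x, y) \<in> {(u, v). u < n \<and> v < n \<and> pd u (pd v f) \<noteq> 0}\<^sup>*" for x y
    using that
  proof (induction rule: rtrancl_induct)
    case base then show ?case by simp
  next
    case (step y z) then show ?case using K5 by auto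
  qed
  define lam where "lam = P 0 0"
  have n0: "0 < n" using an by simp
  have diag: "P m j = (if m = j then lam else 0)" if "m < n" "j < n" for m j
    using K3 K6 c4 that n0 by (auto simp: lam_def hessian_graph_connected_def)
  have S1: "(\<Sum>m<n. \<Sum>j<n. B k m * P m j * A j k) = lam" if k: "k < n" for k
  proof -
    have "(\<Sum>m<n. \<Sum>j<n. B k m * P m j * A j k) = (\<Sum>m<n. \<Sum>j<n. if j = m then B k m * lam * A m k else 0)"
      by (intro sum.cong refl) (auto simp: diag)
    also have "\<dots> = (\<Sum>m<n. B k m * lam * A m k)" by simp
    also have "\<dots> = lam * (\<Sum>m<n. B k m * A m k)" by (simp add: sum_distrib_left ac_simps)
    also have "\<dots> = lam" using BA k by simp
    finally show ?thesis .
  qed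
  have S2: "(\<Sum>m<n. \<Sum>j<n. B k m * P m j * A j k) = (if k < a then 1 else 0)" if k: "k < n" for k
  proof -
    have "(\<Sum>m<n. \<Sum>j<n. B k m * P m j * A j k) = (\<Sum>m<n. \<Sum>j<n. \<Sum>i<a. (B k m * A m i) * (B i j * A j k))"
      by (simp add: P_def sum_distrib_left sum_distrib_right ac_simps)
    also have "\<dots> = (\<Sum>i<a. (\<Sum>m<n. B k m * A m i) * (\<Sum>j<n. B i j * A j k))"
    proof -
      have "(\<Sum>m<n. \<Sum>j<n. \<Sum>i<a. (B k m * A m i) * (B i j * A j k)) =
            (\<Sum>m<n. \<Sum>i<a. \<Sum>j<n. (B k m * A m i) * (B i j * A j k))"
        by (rule sum.cong[OF refl]) (rule sum.swap)
      also have "\<dots> = (\<Sum>i<a. \<Sum>m<n. \<Sum>j<n. (B k m * A m i) * (B i j * A j k))"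
        by (rule sum.swap)
      also have "\<dots> = (\<Sum>i<a. (\<Sum>m<n. B k m * A m i) * (\<Sum>j<n. B i j * A j k))"
        by (simp only: sum_product)
      finally show ?thesis .
    qed
    also have "\<dots> = (\<Sum>i<a. if i = k then 1 else 0)"
      using BA k an by (intro sum.cong refl) auto
    also have "\<dots> = (if k < a then 1 else 0)" by simp
    finally show ?thesis .
  qed
  have "lam = 1" using S1[OF n0] S2[OF n0] a1 by simp
  moreover have "lam = 0" using S1[of "n - 1"] S2[of "n - 1"] n0 a2 an by simp
  ultimately show False by simp
qed

end
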